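(* For every PICOD hypergraph $\mathcal{H}$, $\beta(\mathcal{H})\ge\eta(\mathcal{H})$, where $\eta(\mathcal{H})$ is the nesting number of $\mathcal{H}$.
   Context: PICOD problem: a server holds $m$ messages $b_1,\dots,b_m\in\mathbb{F}_q$; there are $n$ clients, client $i$ having side-information $\{b_j: j\in S_i\}$, $S_i\subseteq[m]$, and request-set $R_i=[m]\setminus S_i$ (assumed non-empty); client $i$ wants any one message $b_j$ with $j\in R_i$. A PICOD scheme of length $\ell$ over $\mathbb{F}_q$ is an encoding map $\phi:\mathbb{F}_q^m\to\mathbb{F}_q^\ell$ such that for every client $i$ there is an index $j_i\in R_i$ and a function $\psi_i$ with $\psi_i(\phi(b),(b_k)_{k\in S_i})=b_{j_i}$ for all $b\in\mathbb{F}_q^m$. The PICOD hypergraph $\mathcal{H}=(\mathcal{V},\mathcal{E})$ has vertex set $[m]$ and edge set $\{R_i:i\in[n]\}$. $\beta_q(\mathcal{H})$ is the minimum length of a PICOD scheme over $\mathbb{F}_q$, and $\beta(\mathcal{H})=\min_q\beta_q(\mathcal{H})$ over all prime powers $q$. A nested collection of hyperedges of $\mathcal{H}$ of nesting length $L$ is a family $\mathcal{E}_1,\dots,\mathcal{E}_L\subseteq\mathcal{E}$ with $|\mathcal{E}_i|=2^{i-1}$ for each $i\in[L]$, such that for every $i\in[L-1]$ and every $R\in\mathcal{E}_i$ there exist non-empty edges $R',R''\in\mathcal{E}_{i+1}$ with $R'\subsetneq R$, $R''\subsetneq R$ and $R'\cap R''=\emptyset$. The nesting number $\eta(\mathcal{H})$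 is the maximum nesting length of a nested collection of hyperedges of $\mathcal{H}$. *)

theory Defs
  imports Main
begin

text \<open>PICOD problem: messages indexed by 0..<m (i.e. [m] shifted by one), clients
indexed by 0..<n, client i has side information S i and request set {..<m} - S i.\<close>

definition picod_request :: "nat \<Rightarrow> (nat \<Rightarrow> nat set) \<Rightarrow> nat \<Rightarrow> nat set" where
  "picod_request m S i = {..<m} - S i"

definition picod_scheme ::
  "nat \<Rightarrow> nat \<Rightarrow> (nat \<Rightarrow> nat set) \<Rightarrow> nat \<Rightarrow> ('a::field list \<Rightarrow> 'a list) \<Rightarrow> bool" where
  "picod_scheme m n S l phi \<longleftrightarrow>
     (\<forall>b. length b = m \<longrightarrow> length (phi b) = l) \<and>
     (\<forall>i<n. \<exists>j \<in> picod_request m S i. \<exists>psi :: 'a list \<Rightarrow> (nat \<Rightarrow> 'a) \<Rightarrow> 'a.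
        \<forall>b. length b = m \<longrightarrow> psi (phi b) (\<lambda>k. if k \<in> S i then b ! k else undefined) = b ! j)"

definition picod_beta_q :: "'a::{field,finite} itself \<Rightarrow> nat \<Rightarrow> nat \<Rightarrow> (nat \<Rightarrow> nat set) \<Rightarrow> nat" where
  "picod_beta_q _ m n S = (LEAST l. \<exists>phi :: 'a list \<Rightarrow> 'a list. picod_scheme m n S l phi)"

definition picod_edges :: "nat \<Rightarrow> nat \<Rightarrow> (nat \<Rightarrow> nat set) \<Rightarrow> nat set set" where
  "picod_edges m n S = {picod_request m S i | i. i < n}"

definition nested_collection :: "nat set set \<Rightarrow> nat \<Rightarrow> (nat \<Rightarrow> nat set set) \<Rightarrow> bool" where
  "nested_collection E L Es \<longleftrightarrow>
     (\<forall>i\<in>{1..L}. Es i \<subseteq> E \<and> card (Es i) = 2 ^ (i - 1)) \<and>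
     (\<forall>i\<in>{1..<L}. \<forall>R\<in>Es i. \<exists>R' \<in> Es (i+1). \<exists>R'' \<in> Es (i+1).
         R' \<noteq> {} \<and> R'' \<noteq> {} \<and> R' \<subset> R \<and> R'' \<subset> R \<and> R' \<inter> R'' = {})"

definition nesting_number :: "nat set set \<Rightarrow> nat" where
  "nesting_number E = Max {L. \<exists>Es. nested_collection E L Es}"

end

theory Submission
  imports Defs "HOL-Library.FuncSet"
begin

lemma key:
  fixes phi :: "'a::field list \<Rightarrow> 'a list"
  assumes sch: "picod_scheme m n S l phi" and S: "\<forall>i<n. S i \<subseteq> {..<m}"
    and nc: "nested_collection (picod_edges m n S) L Es"
  shows "(d = 0 \<or> (\<exists>i. 1 \<le> i \<and> i + d \<le> L + 1 \<and> R \<in> Es i)) \<Longrightarrow>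
    \<exists>J. J \<subseteq> R \<and> finite J \<and> card J = d \<and>
      (\<forall>b b'. length b = m \<longrightarrow> length b' = m \<longrightarrow> (\<forall>k<m. k \<notin> J \<longrightarrow> b!k = b'!k)
          \<longrightarrow> phi b = phi b' \<longrightarrow> b = b')"
proof (induction d arbitrary: R)
  case 0
  show ?case
    by (intro exI[of _ "{}"]) (auto intro: nth_equalityI)
next
  case (Suc d)
  then obtain i where i: "1 \<le> i" "i + Suc d \<le> L + 1" "R \<in> Es i" by auto
  have "R \<in> picod_edges m n S" using nc i unfolding nested_collection_def by auto
  then obtain c where c: "c < n" "R = picod_request m S c" unfolding picod_edges_def by auto
  from sch c obtain j psi where j: "j \<in> R" and psi: "\<forall>b. length b = m \<longrightarrow>
      psi (phi b) (\<lambda>k. if k \<in> S c then b ! k else undefined) = b ! j"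
    unfolding picod_scheme_def by blast
  have "\<exists>R'. R' \<subseteq> R \<and> j \<notin> R' \<and> (d = 0 \<or> (\<exists>i. 1 \<le> i \<and> i + d \<le> L + 1 \<and> R' \<in> Es i))"
  proof (cases "d = 0")
    case True then show ?thesis by (intro exI[of _ "{}"]) auto
  next
    case False
    then have "i \<in> {1..<L}" using i by auto
    have "\<forall>i\<in>{1..<L}. \<forall>R\<in>Es i. \<exists>R' \<in> Es (i+1). \<exists>R'' \<in> Es (i+1).
         R' \<noteq> {} \<and> R'' \<noteq> {} \<and> R' \<subset> R \<and> R'' \<subset> R \<and> R' \<inter> R'' = {}"
      using nc unfolding nested_collection_def by (rule conjunct2)
    then have "\<exists>R' \<in> Es (i+1). \<exists>R'' \<in> Es (i+1).
         R' \<noteq> {} \<and> R'' \<noteq> {} \<and> R' \<subset> R \<and> R'' \<subset> R \<and> R' \<inter> R'' = {}"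
      using \<open>i \<in> {1..<L}\<close> i(3) by blast
    then obtain R' R'' where r: "R' \<in> Es (i+1)" "R'' \<in> Es (i+1)" "R' \<subset> R" "R'' \<subset> R" "R' \<inter> R'' = {}"
      by blast
    show ?thesis
    proof (cases "j \<in> R'")
      case True
      then have "j \<notin> R''" using r by auto
      then show ?thesis using r i by (intro exI[of _ R'']) auto
    next
      case False
      then show ?thesis using r i by (intro exI[of _ R']) auto
    qed
  qed
  then obtain R' where R': "R' \<subseteq> R" "j \<notin> R'" "d = 0 \<or> (\<exists>i. 1 \<le> i \<and> i + d \<le> L + 1 \<and> R' \<in> Es i)"
    by blast
  from Suc.IH[OF R'(3)] obtain J' where J': "J' \<subseteq> R'" "finite J'" "card J' = d"
    and inj: "\<forall>b b'. length b = m \<longrightarrow> length b' = m \<longrightarrow> (\<forall>k<m. k \<notin> J' \<longrightarrow> b!k = b'!k)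
          \<longrightarrow> phi b = phi b' \<longrightarrow> b = b'" by blast
  have jJ: "j \<notin> J'" using J' R' by auto
  have JR: "insert j J' \<subseteq> R" using J' R' j by auto
  show ?case
  proof (intro exI[of _ "insert j J'"] conjI allI impI)
    show "insert j J' \<subseteq> R" by fact
    show "finite (insert j J')" using J' by simp
    show "card (insert j J') = Suc d" using J' jJ by simp
  next
    fix b b' :: "'a list"
    assume lb: "length b = m" "length b' = m" and ag: "\<forall>k<m. k \<notin> insert j J' \<longrightarrow> b!k = b'!k"
      and ph: "phi b = phi b'"
    have side: "(\<lambda>k. if k \<in> S c then b ! k else undefined) = (\<lambda>k. if k \<in> S c then b' ! k else undefined)"
    proof
      fix k
      show "(if k \<in> S c then b ! k else undefined) = (if k \<in> S c then b' ! k else undefined)"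
      proof (cases "k \<in> S c")
        case True
        then have "k < m" using S c by auto
        moreover have "k \<notin> insert j J'" using JR True c by (auto simp: picod_request_def)
        ultimately show ?thesis using ag True by auto
      qed simp
    qed
    have "b ! j = psi (phi b) (\<lambda>k. if k \<in> S c then b ! k else undefined)" using psi lb by simp
    also have "\<dots> = psi (phi b') (\<lambda>k. if k \<in> S c then b' ! k else undefined)" using ph side by simp
    also have "\<dots> = b' ! j" using psi lb by simp
    finally have "b ! j = b' ! j" .
    then have "\<forall>k<m. k \<notin> J' \<longrightarrow> b!k = b'!k" using ag by auto
    then show "b = b'" using inj lb ph by blast
  qed
qed

lemma bound:
  fixes phi :: "'a::{field,finite} list \<Rightarrow> 'a list"
  assumes sch: "picod_scheme m n S l phi" and S: "\<forall>i<n. S i \<subseteq> {..<m}"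
    and nc: "nested_collection (picod_edges m n S) L Es"
  shows "L \<le> l"
proof (cases "L = 0")
  case True then show ?thesis by simp
next
  case False
  then have "card (Es 1) = 1" using nc unfolding nested_collection_def by auto
  then obtain R where R: "R \<in> Es 1" by (metis card_1_singletonE insertI1)
  have "R \<in> picod_edges m n S" using nc R False unfolding nested_collection_def by auto
  then have Rm: "R \<subseteq> {..<m}" unfolding picod_edges_def picod_request_def by auto
  from key[OF sch S nc, of L R] R obtain J where J: "J \<subseteq> R" "finite J" "card J = L"
    and inj: "\<forall>b b'. length b = m \<longrightarrow> length b' = m \<longrightarrow> (\<forall>k<m. k \<notin> J \<longrightarrow> b!k = b'!k)
          \<longrightarrow> phi b = phi b' \<longrightarrow> b = b'" by force
  have Jm: "J \<subseteq> {..<m}" using J Rm by auto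
  define emb where "emb = (\<lambda>f::nat \<Rightarrow> 'a. map (\<lambda>k. if k \<in> J then f k else 0) [0..<m])"
  have le: "length (emb f) = m" for f unfolding emb_def by simp
  have injc: "inj_on (phi \<circ> emb) (PiE J (\<lambda>_. UNIV))"
  proof (rule inj_onI)
    fix f g assume f: "f \<in> PiE J (\<lambda>_. UNIV)" and g: "g \<in> PiE J (\<lambda>_. UNIV)"
      and e: "(phi \<circ> emb) f = (phi \<circ> emb) g"
    have nth: "emb h ! k = (if k \<in> J then h k else 0)" if "k < m" for h k
      using that unfolding emb_def by simp
    have "\<forall>k<m. k \<notin> J \<longrightarrow> emb f ! k = emb g ! k" using nth by simp
    moreover have "phi (emb f) = phi (emb g)" using e by simp
    ultimately have "emb f = emb g"
      using inj le by blast
    have "f k = g k" if "k \<in> J" for k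
    proof -
      have "k < m" using that Jm by auto
      then show ?thesis using nth[of k f] nth[of k g] \<open>emb f = emb g\<close> that by simp
    qed
    then have "\<forall>k\<in>J. f k = g k" by blast
    then show "f = g" using f g by (auto intro: PiE_ext)
  qed
  moreover have img: "(phi \<circ> emb) ` PiE J (\<lambda>_. UNIV) \<subseteq> {xs. set xs \<subseteq> UNIV \<and> length xs = l}"
    using sch le unfolding picod_scheme_def by auto
  ultimately have "card (PiE J (\<lambda>_. UNIV::'a set)) \<le> card {xs. set xs \<subseteq> (UNIV::'a set) \<and> length xs = l}"
  proof (rule card_inj_on_le)
    show "finite {xs. set xs \<subseteq> (UNIV::'a set) \<and> length xs = l}"
      by (rule finite_lists_length_eq) simp
  qed
  then have "card (UNIV::'a set) ^ L \<le> card (UNIV::'a set) ^ l"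
    using J card_lists_length_eq[of "UNIV::'a set" l] by (simp add: card_PiE)
  moreover have "1 < card (UNIV::'a set)"
  proof -
    have "{0::'a, 1} \<subseteq> UNIV" by simp
    then have "card {0::'a, 1} \<le> card (UNIV::'a set)" by (intro card_mono) auto
    then show ?thesis by simp
  qed
  ultimately show ?thesis using power_le_imp_le_exp by blast
qed

theorem theorem2:
  fixes m n :: nat and S :: "nat \<Rightarrow> nat set"
  assumes "\<forall>i<n. S i \<subseteq> {..<m}"
    and "\<forall>i<n. picod_request m S i \<noteq> {}"
  shows "nesting_number (picod_edges m n S) \<le> picod_beta_q TYPE('a::{field,finite}) m n S"
proof -
  have ex: "\<exists>phi :: 'a list \<Rightarrow> 'a list. picod_scheme m n S m phi"
  proof (intro exI[of _ "\<lambda>b. b"])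
    show "picod_scheme m n S m (\<lambda>b::'a list. b)"
      unfolding picod_scheme_def
    proof (intro conjI allI impI)
      fix i assume "i < n"
      then obtain j where "j \<in> picod_request m S i" using assms(2) by auto
      then show "\<exists>j\<in>picod_request m S i. \<exists>psi :: 'a list \<Rightarrow> (nat \<Rightarrow> 'a) \<Rightarrow> 'a.
        \<forall>b. length b = m \<longrightarrow> psi b (\<lambda>k. if k \<in> S i then b ! k else undefined) = b ! j"
        by (intro bexI[of _ j] exI[of _ "\<lambda>c s. c ! j"]) auto
    qed simp
  qed
  define B where "B = picod_beta_q TYPE('a) m n S"
  have "\<exists>phi :: 'a list \<Rightarrow> 'a list. picod_scheme m n S B phi"
  proof -
    have ex2: "\<exists>l. \<exists>phi :: 'a list \<Rightarrow> 'a list. picod_scheme m n S l phi" using ex by blast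
    show ?thesis unfolding B_def picod_beta_q_def by (rule LeastI_ex[OF ex2])
  qed
  then obtain phi :: "'a list \<Rightarrow> 'a list" where sch: "picod_scheme m n S B phi" by blast
  have all: "\<forall>L\<in>{L. \<exists>Es. nested_collection (picod_edges m n S) L Es}. L \<le> B"
    using bound[OF sch assms(1)] by blast
  have fin: "finite {L. \<exists>Es. nested_collection (picod_edges m n S) L Es}"
  proof (rule finite_subset)
    show "{L. \<exists>Es. nested_collection (picod_edges m n S) L Es} \<subseteq> {..B}"
      using all by (simp add: subset_iff)
  qed simp
  have ne: "0 \<in> {L. \<exists>Es. nested_collection (picod_edges m n S) L Es}"
    unfolding nested_collection_def by auto
  show ?thesis unfolding nesting_number_def B_def[symmetric]
    using fin ne all by (subst Max_le_iff) auto
qed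

end
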